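(* For nonzero complex parameters $g,a$ let $T(g,a)$ be the infinite matrix indexed by $i,j\in\mathbb{Z}_{\ge 0}$ with entries $$T(g,a)_{i,j}=(ag)^{i+j}\sum_{k=0}^{\min(i,j)}\binom{i}{k}\binom{j}{k}a^{-2k}.$$ Let $(g,a)$ and $(g',a')$ be two such parameter pairs, with $|g|,|g'|$ small enough that the matrix products $T(g,a)T(g',a')$ and $T(g',a')T(g,a)$ (defined by $(XY)_{i,j}=\sum_{k\ge0}X_{i,k}Y_{k,j}$) converge absolutely entrywise. Then $T(g,a)$ and $T(g',a')$ commute if and only if $\varphi(g,a)=\varphi(g',a')$, where $$\varphi(g,a)=\frac{1-g^2(1-a^2)}{a g}.$$
   Context: $T(g,a)$ is the transfer matrix of the model of 1+1-dimensional Lorentzian triangulations, with weight $g$ per triangle and weight $a$ per pair of consecutive triangles in a time slice pointing in the same direction; the indices $i,j$ count the up- and down-pointing triangles of a time slice. *)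

theory Defs
  imports Complex_Main
begin

definition T :: "complex \<Rightarrow> complex \<Rightarrow> nat \<Rightarrow> nat \<Rightarrow> complex" where
  "T g a i j = (a * g) ^ (i + j) *
     (\<Sum>k = 0..min i j. of_nat (i choose k) * of_nat (j choose k) * inverse (a ^ (2 * k)))"

definition matprod :: "(nat \<Rightarrow> nat \<Rightarrow> complex) \<Rightarrow> (nat \<Rightarrow> nat \<Rightarrow> complex) \<Rightarrow> nat \<Rightarrow> nat \<Rightarrow> complex" where
  "matprod X Y i j = (\<Sum>k. X i k * Y k j)"

definition phi :: "complex \<Rightarrow> complex \<Rightarrow> complex" where
  "phi g a = (1 - g^2 * (1 - a^2)) / (a * g)"

end

theory Submission
  imports Defs
begin

definition S :: "complex \<Rightarrow> nat \<Rightarrow> nat \<Rightarrow> nat \<Rightarrow> complex" where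
  "S w n i k = (\<Sum>m\<le>n. of_nat (i choose m) * of_nat (k choose m) * w ^ m)"

lemma T_S:
  assumes "min i k \<le> n"
  shows "T g a i k = (a*g)^(i+k) * S (inverse (a^2)) n i k"
proof -
  have "(\<Sum>m = 0..min i k. of_nat (i choose m) * of_nat (k choose m) * inverse (a ^ (2 * m)))
      = (\<Sum>m\<le>n. of_nat (i choose m) * of_nat (k choose m) * inverse (a ^ (2 * m)))"
    by (rule sum.mono_neutral_left) (use assms in auto)
  also have "\<dots> = S (inverse (a^2)) n i k"
    unfolding S_def by (simp add: power_inverse power_mult)
  finally show ?thesis unfolding T_def by simp
qed

lemma S_rec:
  "S w (Suc n) (Suc i) (Suc k) - S w (Suc n) i (Suc k) - S w (Suc n) (Suc i) k + S w (Suc n) i k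
     = w * S w n i k"
proof -
  have "S w (Suc n) (Suc i) (Suc k) - S w (Suc n) i (Suc k) - S w (Suc n) (Suc i) k + S w (Suc n) i k
     = (\<Sum>m\<le>Suc n. (of_nat (Suc i choose m) - of_nat (i choose m)) *
           (of_nat (Suc k choose m) - of_nat (k choose m)) * w^m)"
    unfolding S_def by (simp add: sum_subtractf[symmetric] sum.distrib[symmetric] algebra_simps)
  also have "\<dots> = (\<Sum>m\<le>n. of_nat (i choose m) * of_nat (k choose m) * w^Suc m)"
    by (subst sum.atMost_Suc_shift) simp
  also have "\<dots> = w * S w n i k" by (simp add: S_def sum_distrib_left mult_ac)
  finally show ?thesis .
qed

lemma T_rec:
  assumes "a \<noteq> 0"
  shows "T g a (Suc i) (Suc k) = a*g*T g a i (Suc k) + a*g*T g a (Suc i) k + g^2*(1-a^2)*T g a i k"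
proof -
  define w where "w = inverse (a^2)"
  define n where "n = i + k + 1"
  have e1: "T g a (Suc i) (Suc k) = (a*g)^(i+k+2) * S w (Suc n) (Suc i) (Suc k)"
    using T_S[of "Suc i" "Suc k" "Suc n"] by (simp add: n_def w_def)
  have e2: "T g a i (Suc k) = (a*g)^(i+k+1) * S w (Suc n) i (Suc k)"
    using T_S[of "i" "Suc k" "Suc n"] by (simp add: n_def w_def)
  have e3: "T g a (Suc i) k = (a*g)^(i+k+1) * S w (Suc n) (Suc i) k"
    using T_S[of "Suc i" "k" "Suc n"] by (simp add: n_def w_def)
  have e4: "T g a i k = (a*g)^(i+k) * S w (Suc n) i k"
    using T_S[of "i" "k" "Suc n"] by (simp add: n_def w_def)
  have e5: "T g a i k = (a*g)^(i+k) * S w n i k"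
    using T_S[of "i" "k" "n"] by (simp add: n_def w_def)
  have c: "g^2*(1-a^2) = (a*g)^2 * (w - 1)"
    using assms by (simp add: w_def field_simps power2_eq_square)
  have r: "S w (Suc n) (Suc i) (Suc k) = S w (Suc n) i (Suc k) + S w (Suc n) (Suc i) k - S w (Suc n) i k + w * S w n i k"
    using S_rec[of w n i k] by (simp add: algebra_simps)
  have s: "S w (Suc n) i k = S w n i k"
    unfolding S_def by (simp add: n_def)
  show ?thesis
    unfolding e1 e2 e3 e4 c r s by (simp add: algebra_simps power_add power2_eq_square)
qed


lemma T_sym: "T g a i k = T g a k i"
proof -
  have "(\<Sum>m = 0..min i k. of_nat (i choose m) * of_nat (k choose m) * inverse (a ^ (2 * m)))
      = (\<Sum>m = 0..min k i. of_nat (k choose m) * of_nat (i choose m) * inverse (a ^ (2 * m)) :: complex)"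
    by (simp add: min.commute mult.commute)
  then show ?thesis unfolding T_def by (simp add: add.commute)
qed

lemma TX0: "T g a i 0 - (if i=0 then 0 else a*g*T g a (i-1) 0) = (if i=0 then 1 else 0)"
  by (cases i) (auto simp: T_def)

lemma TXS:
  assumes "a \<noteq> 0"
  shows "T g a i (Suc k) - (if i=0 then 0 else a*g*T g a (i-1) (Suc k))
       = a*g*T g a i k + (if i=0 then 0 else g^2*(1-a^2)*T g a (i-1) k)"
proof (cases i)
  case 0
  then show ?thesis by (simp add: T_def)
next
  case (Suc i')
  then show ?thesis using T_rec[OF assms, of g i' k] by simp
qed

lemma lin: fixes u v c d m m1 m2 m12 x0 :: complex
  assumes "u*v*m + u*d*m2 + c*v*m1 + c*d*m12 - (m - v*m2 - u*m1 + u*v*m12) = 0 - x0"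
  shows "(1-u*v)*m = (v+u*d)*m2 + (u+c*v)*m1 - (u*v-c*d)*m12 + x0"
  using assms by algebra

lemma mat_rec:
  fixes X Y :: "nat \<Rightarrow> nat \<Rightarrow> complex" and u v c d :: complex
  assumes X0: "\<And>i. X i 0 - (if i=0 then 0 else u * X (i-1) 0) = (if i = 0 then 1 else 0)"
    and XS: "\<And>i k. X i (Suc k) - (if i=0 then 0 else u * X (i-1) (Suc k))
               = u * X i k + (if i=0 then 0 else c * X (i-1) k)"
    and Y0: "\<And>j. Y 0 j - (if j=0 then 0 else v * Y 0 (j-1)) = (if j=0 then 1 else 0)"
    and YS: "\<And>j k. Y (Suc k) j - (if j=0 then 0 else v * Y (Suc k) (j-1))
               = v * Y k j + (if j=0 then 0 else d * Y k (j-1))"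
    and sm: "\<And>i j. summable (\<lambda>k. X i k * Y k j)"
  shows "(1 - u*v) * matprod X Y i j =
      (v + u*d) * (if j=0 then 0 else matprod X Y i (j-1))
    + (u + c*v) * (if i=0 then 0 else matprod X Y (i-1) j)
    - (u*v - c*d) * (if i=0 \<or> j=0 then 0 else matprod X Y (i-1) (j-1))
    + (if i=0 \<and> j=0 then 1 else 0)"
proof -
  define M where "M = matprod X Y"
  define Xp where "Xp k = (if i=0 then 0 else X (i-1) k)" for k
  define Yp where "Yp k = (if j=0 then 0 else Y k (j-1))" for k
  define M1 where "M1 = (if i=0 then 0 else M (i-1) j)"
  define M2 where "M2 = (if j=0 then 0 else M i (j-1))"
  define M12 where "M12 = (if i=0 \<or> j=0 then 0 else M (i-1) (j-1))"
  have s0: "(\<lambda>k. X i k * Y k j) sums M i j"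
    using sm by (simp add: M_def matprod_def summable_sums)
  have s1: "(\<lambda>k. Xp k * Y k j) sums M1"
    using sm by (cases "i=0") (auto simp: Xp_def M1_def M_def matprod_def summable_sums)
  have s2: "(\<lambda>k. X i k * Yp k) sums M2"
    using sm by (cases "j=0") (auto simp: Yp_def M2_def M_def matprod_def summable_sums)
  have s12: "(\<lambda>k. Xp k * Yp k) sums M12"
    using sm by (cases "i=0 \<or> j=0") (auto simp: Xp_def Yp_def M12_def M_def matprod_def summable_sums)
  define x where "x k = (X i k - u * Xp k) * (Y k j - v * Yp k)" for k
  have "x = (\<lambda>k. X i k * Y k j - v*(X i k * Yp k) - u*(Xp k * Y k j) + (u*v)*(Xp k * Yp k))"
    by (auto simp: x_def fun_eq_iff algebra_simps)
  then have sA: "x sums (M i j - v*M2 - u*M1 + (u*v)*M12)"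
    by (simp only:) (intro sums_add sums_diff sums_mult s0 s1 s2 s12)
  have xs: "X i (Suc k) - u * Xp (Suc k) = u * X i k + c * Xp k" for k
    using XS[where i=i and k=k] by (auto simp: Xp_def)
  have ys: "Y (Suc k) j - v * Yp (Suc k) = v * Y k j + d * Yp k" for k
    using YS[where j=j and k=k] by (auto simp: Yp_def)
  have "(\<lambda>k. x (Suc k)) = (\<lambda>k. (u*v)*(X i k * Y k j) + (u*d)*(X i k*Yp k) + (c*v)*(Xp k*Y k j) + (c*d)*(Xp k * Yp k))"
    unfolding x_def xs ys by (auto simp: fun_eq_iff algebra_simps)
  then have sB: "(\<lambda>k. x (Suc k)) sums ((u*v)*M i j + (u*d)*M2 + (c*v)*M1 + (c*d)*M12)"
    by (simp only:) (intro sums_add sums_diff sums_mult s0 s1 s2 s12)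
  have x0: "x 0 = (if i=0 \<and> j=0 then 1 else 0)"
    using X0[of i] Y0[of j] by (auto simp: x_def Xp_def Yp_def)
  have "x \<longlonglongrightarrow> 0" using sums_summable[OF sA] by (rule summable_LIMSEQ_zero)
  then have t: "(\<lambda>k. x (Suc k) - x k) sums (0 - x 0)" by (rule telescope_sums)
  have "(\<lambda>k. x (Suc k) - x k) sums (((u*v)*M i j + (u*d)*M2 + (c*v)*M1 + (c*d)*M12) - (M i j - v*M2 - u*M1 + (u*v)*M12))"
    by (rule sums_diff[OF sB sA])
  then have "((u*v)*M i j + (u*d)*M2 + (c*v)*M1 + (c*d)*M12) - (M i j - v*M2 - u*M1 + (u*v)*M12) = 0 - x 0"
    by (rule sums_unique2[OF _ t])
  from lin[OF this] show ?thesis unfolding x0 M1_def M2_def M12_def M_def .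
qed

theorem mainTheorem1:
  fixes g a g' a' :: complex
  assumes "g \<noteq> 0" and "a \<noteq> 0" and "g' \<noteq> 0" and "a' \<noteq> 0"
    and "\<forall>i j. summable (\<lambda>k. norm (T g a i k * T g' a' k j))"
    and "\<forall>i j. summable (\<lambda>k. norm (T g' a' i k * T g a k j))"
  shows "matprod (T g a) (T g' a') = matprod (T g' a') (T g a) \<longleftrightarrow> phi g a = phi g' a'"
proof -
  define u where "u = a*g"
  define v where "v = a'*g'"
  define c where "c = g^2*(1-a^2)"
  define d where "d = g'^2*(1-a'^2)"
  define M where "M = matprod (T g a) (T g' a')"
  define M' where "M' = matprod (T g' a') (T g a)"
  have sm1: "\<And>i j. summable (\<lambda>k. T g a i k * T g' a' k j)"
    by (rule summable_norm_cancel) (use assms(5) in blast)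
  have sm2: "\<And>i j. summable (\<lambda>k. T g' a' i k * T g a k j)"
    by (rule summable_norm_cancel) (use assms(6) in blast)
  have Y0: "T g a 0 j - (if j=0 then 0 else a*g * T g a 0 (j-1)) = (if j=0 then 1 else 0)" for g a j
    unfolding T_sym[of g a 0 j] T_sym[of g a 0 "j-1"] by (rule TX0)
  have YS: "T g a (Suc k) j - (if j=0 then 0 else a*g * T g a (Suc k) (j-1))
               = a*g * T g a k j + (if j=0 then 0 else g^2*(1-a^2) * T g a k (j-1))" if "a \<noteq> 0" for g a j k
    unfolding T_sym[of g a "Suc k" j] T_sym[of g a "Suc k" "j-1"] T_sym[of g a k j] T_sym[of g a k "j-1"]
    by (rule TXS[OF that])
  have r1: "(1 - u*v) * M i j =
      (v + u*d) * (if j=0 then 0 else M i (j-1))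
    + (u + c*v) * (if i=0 then 0 else M (i-1) j)
    - (u*v - c*d) * (if i=0 \<or> j=0 then 0 else M (i-1) (j-1))
    + (if i=0 \<and> j=0 then 1 else 0)" for i j
    unfolding M_def u_def v_def c_def d_def
    by (rule mat_rec[OF TX0 TXS[OF assms(2)] Y0 YS[OF assms(4)] sm1])
  have r2: "(1 - v*u) * M' i j =
      (u + v*c) * (if j=0 then 0 else M' i (j-1))
    + (v + d*u) * (if i=0 then 0 else M' (i-1) j)
    - (v*u - d*c) * (if i=0 \<or> j=0 then 0 else M' (i-1) (j-1))
    + (if i=0 \<and> j=0 then 1 else 0)" for i j
    unfolding M'_def u_def v_def c_def d_def
    by (rule mat_rec[OF TX0 TXS[OF assms(4)] Y0 YS[OF assms(2)] sm2])
  have phieq: "phi g a = phi g' a' \<longleftrightarrow> u + c*v = v + d*u"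
  proof -
    have "phi g a = (1 - c)/u" "phi g' a' = (1-d)/v"
      by (simp_all add: phi_def u_def v_def c_def d_def)
    moreover have "u \<noteq> 0" "v \<noteq> 0" using assms by (auto simp: u_def v_def)
    ultimately have "phi g a = phi g' a' \<longleftrightarrow> (1-c)*v = (1-d)*u"
      by (simp add: frac_eq_eq)
    also have "\<dots> \<longleftrightarrow> u + c*v = v + d*u" by (auto simp: algebra_simps)
    finally show ?thesis .
  qed
  have m00: "(1 - u*v) * M 0 0 = 1" using r1[of 0 0] by simp
  have m00': "(1 - u*v) * M' 0 0 = 1" using r2[of 0 0] by (simp add: mult.commute)
  have nz: "1 - u*v \<noteq> 0" using m00 by auto
  show ?thesis
    unfolding M_def[symmetric] M'_def[symmetric] phieq
  proof
    assume e: "M = M'"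
    have "(1 - u*v) * M 1 0 = (u + c*v) * M 0 0" using r1[of 1 0] by simp
    moreover have "(1 - u*v) * M' 1 0 = (v + d*u) * M' 0 0" using r2[of 1 0] by (simp add: mult.commute)
    ultimately have "(u + c*v) * M 0 0 = (v + d*u) * M 0 0" using e by simp
    moreover have "M 0 0 \<noteq> 0" using m00 by auto
    ultimately show "u + c*v = v + d*u" by simp
  next
    assume e: "u + c*v = v + d*u"
    have "\<forall>j. M i j = M' i j" for i
    proof (induction i)
      case 0
      show ?case
      proof
        fix j show "M 0 j = M' 0 j"
        proof (induction j)
          case 0 then show ?case using m00 m00' nz by (metis mult_left_cancel)
        next
          case (Suc j)
          have "(1 - u*v) * M 0 (Suc j) = (1 - u*v) * M' 0 (Suc j)"
            using r1[of 0 "Suc j"] r2[of 0 "Suc j"] Suc e by (simp add: mult.commute)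
          then show ?case using nz by simp
        qed
      qed
    next
      case (Suc i)
      note IHi = Suc.IH
      show ?case
      proof
        fix j show "M (Suc i) j = M' (Suc i) j"
        proof (induction j)
          case 0
          have "(1 - u*v) * M (Suc i) 0 = (1 - u*v) * M' (Suc i) 0"
            using r1[of "Suc i" 0] r2[of "Suc i" 0] Suc.IH e by (simp add: mult.commute)
          then show ?case using nz by simp
        next
          case (Suc j)
          have "(1 - u*v) * M (Suc i) (Suc j) = (1 - u*v) * M' (Suc i) (Suc j)"
            using r1[of "Suc i" "Suc j"] r2[of "Suc i" "Suc j"] IHi Suc.IH e
            by (simp add: mult.commute)
          then show ?case using nz by simp
        qed
      qed
    qed
    then show "M = M'" by (auto simp: fun_eq_iff)
  qed
qed

end
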